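(* Let $r\in\mathbb N$ and let $M$ be the sub-add move matrix. For every $0\le i<2r$, each vertex of $\mathcal P_i$ has a unique child in $\Gamma_{M,\,2^r}$, and this child lies in $\mathcal P_{i+1}$. The vertex $(0,0)\in\mathcal P_{2r}$ is its own unique child.
   Context: The sub-add move matrix is $M=\begin{pmatrix}1&-1\\1&1\end{pmatrix}$. For $n\in\mathbb N$, $\Gamma_{M,\,n}$ is the directed graph with vertex set $\mathbb Z_n^2$ and arcs $((a,b),(a-b,a+b))$ for all $(a,b)\in\mathbb Z_n^2$ (computed mod $n$; loops allowed). If $({\bf v},{\bf w})$ is an arc, ${\bf v}$ is a parent of ${\bf w}$ and ${\bf w}$ a child of ${\bf v}$. For $n=2^r$, partition $\mathbb Z_{2^r}^2$ as follows: for $0\le t\le r-1$, $\mathcal P_{2t}$ is the set of pairs $(2^tx,2^ty)\in\mathbb Z_{2^r}^2$ with $x,y$ integers exactly one of which is odd, and $\mathcal P_{2t+1}$ is the set of pairs $(2^tx,2^ty)$ with $x,y$ both odd; $\mathcal P_{2r}=\{(0,0)\}$. (Parities are well defined since $x,y$ are determined modulo $2^{r-t}$ with $r-t\ge1$.) *)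

theory Defs
  imports Main
begin

definition Zn2 :: "nat \<Rightarrow> (int \<times> int) set" where
  "Zn2 n = {0..<int n} \<times> {0..<int n}"

definition subadd_M :: "int \<times> int \<Rightarrow> int \<times> int" where
  "subadd_M v = (fst v - snd v, fst v + snd v)"

definition modpair :: "nat \<Rightarrow> int \<times> int \<Rightarrow> int \<times> int" where
  "modpair n v = (fst v mod int n, snd v mod int n)"

definition Gamma_arcs :: "nat \<Rightarrow> ((int \<times> int) \<times> (int \<times> int)) set" where
  "Gamma_arcs n = {(v, w). v \<in> Zn2 n \<and> w = modpair n (subadd_M v)}"

definition is_child :: "nat \<Rightarrow> int \<times> int \<Rightarrow> int \<times> int \<Rightarrow> bool" where
  "is_child n v w \<longleftrightarrow> (v, w) \<in> Gamma_arcs n"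

definition Pcls :: "nat \<Rightarrow> nat \<Rightarrow> (int \<times> int) set" where
  "Pcls r i =
    (if i = 2 * r then {(0, 0)}
     else if i < 2 * r then
       (if even i then
          {modpair (2 ^ r) (2 ^ (i div 2) * x, 2 ^ (i div 2) * y) | x y :: int. odd x \<noteq> odd y}
        else
          {modpair (2 ^ r) (2 ^ (i div 2) * x, 2 ^ (i div 2) * y) | x y :: int. odd x \<and> odd y})
     else {})"

end

theory Submission
  imports Defs
begin

lemma child_mod: "modpair n (subadd_M (modpair n (a, b))) = modpair n (a - b, a + b)"
  by (simp add: modpair_def subadd_M_def mod_diff_eq mod_add_eq)

lemma modpair_in: "n > 0 \<Longrightarrow> modpair n v \<in> Zn2 n"
  by (simp add: modpair_def Zn2_def)

lemma is_child_iff: "is_child n v w \<longleftrightarrow> v \<in> Zn2 n \<and> w = modpair n (subadd_M v)"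
  by (simp add: is_child_def Gamma_arcs_def)

lemma step:
  assumes i: "i < 2 * r" and v: "v \<in> Pcls r i"
  shows "v \<in> Zn2 (2 ^ r) \<and> modpair (2 ^ r) (subadd_M v) \<in> Pcls r (i + 1)"
proof (cases "even i")
  case True
  define t where "t = i div 2"
  have it: "i = 2 * t" using True t_def by simp
  obtain x y :: int where xy: "odd x \<noteq> odd y"
    and vd: "v = modpair (2 ^ r) (2 ^ t * x, 2 ^ t * y)"
    using v i True by (auto simp: Pcls_def t_def)
  have c: "modpair (2 ^ r) (subadd_M v) = modpair (2 ^ r) (2 ^ t * (x - y), 2 ^ t * (x + y))"
    using vd child_mod by (simp add: algebra_simps)
  have lt: "i + 1 < 2 * r" using i it by simp
  have o: "odd (x - y) \<and> odd (x + y)" using xy by auto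
  have "modpair (2 ^ r) (subadd_M v) \<in> Pcls r (i + 1)"
  proof -
    have e: "(i+1) div 2 = t" "\<not> even (i+1)" "i + 1 \<noteq> 2 * r" using it lt by auto
    have "modpair (2 ^ r) (2 ^ t * (x - y), 2 ^ t * (x + y)) \<in>
      {modpair (2 ^ r) (2 ^ t * x, 2 ^ t * y) | x y :: int. odd x \<and> odd y}"
      using o by blast
    then show ?thesis unfolding c Pcls_def using e lt by simp
  qed
  moreover have "v \<in> Zn2 (2 ^ r)" using vd modpair_in by simp
  ultimately show ?thesis by simp
next
  case False
  define t where "t = i div 2"
  have it: "i = 2 * t + 1" using False t_def by presburger
  obtain x y :: int where xy: "odd x" "odd y"
    and vd: "v = modpair (2 ^ r) (2 ^ t * x, 2 ^ t * y)"
    using v i False by (auto simp: Pcls_def t_def)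
  obtain x' where x': "x - y = 2 * x'" using xy by (metis evenE even_diff odd_add)
  obtain y' where y': "x + y = 2 * y'" using xy by (metis evenE odd_add)
  have o: "odd x' \<noteq> odd y'"
  proof -
    have "x' + y' = x" using x' y' by simp
    then show ?thesis using xy by auto
  qed
  have c: "modpair (2 ^ r) (subadd_M v) = modpair (2 ^ r) (2 ^ (t+1) * x', 2 ^ (t+1) * y')"
  proof -
    have "modpair (2 ^ r) (subadd_M v) = modpair (2 ^ r) (2 ^ t * (x - y), 2 ^ t * (x + y))"
      using vd child_mod by (simp add: algebra_simps)
    also have "(2 ^ t * (x - y), 2 ^ t * (x + y)) = ((2::int) ^ (t+1) * x', 2 ^ (t+1) * y')"
      using x' y' by simp
    finally show ?thesis .
  qed
  have "modpair (2 ^ r) (subadd_M v) \<in> Pcls r (i + 1)"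
  proof (cases "i + 1 = 2 * r")
    case True
    then have "t + 1 = r" using it by simp
    then show ?thesis unfolding c using True by (simp add: Pcls_def modpair_def)
  next
    case False
    then have lt: "i + 1 < 2 * r" using i by simp
    have "(i + 1) div 2 = t + 1" "even (i+1)" using it by auto
    moreover have "modpair (2 ^ r) (2 ^ (t+1) * x', 2 ^ (t+1) * y') \<in>
      {modpair (2 ^ r) (2 ^ (t+1) * x, 2 ^ (t+1) * y) | x y :: int. odd x \<noteq> odd y}"
      using o by blast
    ultimately show ?thesis unfolding c Pcls_def using lt False by simp
  qed
  moreover have "v \<in> Zn2 (2 ^ r)" using vd modpair_in by simp
  ultimately show ?thesis by simp
qed

theorem proposition5p2:
  fixes r :: nat
  shows "(\<forall>i < 2 * r. \<forall>v \<in> Pcls r i.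
            (\<exists>!w. is_child (2 ^ r) v w) \<and>
            (\<forall>w. is_child (2 ^ r) v w \<longrightarrow> w \<in> Pcls r (i + 1)))
         \<and> (0, 0) \<in> Pcls r (2 * r)
         \<and> (\<exists>!w. is_child (2 ^ r) (0, 0) w)
         \<and> is_child (2 ^ r) (0, 0) (0, 0)"
proof -
  have z: "(0::int, 0::int) \<in> Zn2 (2 ^ r)" by (simp add: Zn2_def)
  show ?thesis
    using step z
    by (auto simp: is_child_iff Pcls_def modpair_def subadd_M_def)
qed

end
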